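(* Let $m\ge 1$ be a fixed integer. Let $(r_t)_{t\in\mathbb{Z}}$ be a real-valued process with $r_t=\sigma\epsilon_t$, where $\sigma>0$ is a constant and $(\epsilon_t)$ is a random process. Let $a_t=1$ if $r_t\neq 0$ and $a_t=0$ if $r_t=0$. Assume $E(\epsilon_t\mid a_t=1)=0$, $E(\epsilon_t^2\mid a_t=1)=1$, and that $P(a_ta_{t-h}=1)>0$ for $h=0,1,\dots,m$. Suppose that $(r_t)$ is strictly stationary and ergodic, with $E(r_t^2)<\infty$ and $E(r_t)=0$. Given observations $r_1,\dots,r_n$, define for $h=0,1,\dots,m$ $$\hat{\gamma}_0(h)=\frac1n\sum_{t=1+h}^n r_tr_{t-h},\quad \hat\rho_0(h)=\frac{\hat\gamma_0(h)}{\hat\gamma_0(0)},\quad \hat{\gamma}_a(h)=\frac1n\sum_{t=h+1}^n a_ta_{t-h},$$ and $\widehat{\Gamma}_{pr}(m)=(\hat\rho_{pr}(1),\dots,\hat\rho_{pr}(m))'$ with $\hat\rho_{pr}(h)=\hat\rho_0(h)\,\hat\gamma_a(0)/\hat\gamma_a(h)$. Let $\rho_\epsilon(h)=E(\epsilon_t\epsilon_{t-h}\mid a_ta_{t-h}=1)$ (which does not depend on $t$) and $\Gamma_\epsilon(m)=(\rho_\epsilon(1),\dots,\rho_\epsilon(m))'$. Then $\widehat{\Gamma}_{pr}(m)\to\Gamma_\epsilon(m)$ almost surely as $n\to\infty$.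
   Context: $a_t$ indicates a nonzero return (a price change) at date $t$. The quantities $\rho_\epsilon(h)$ are the serial correlations of the price changes. *)

theory Defs
  imports "HOL-Probability.Probability"
begin

definition strictly_stationary :: "'a measure \<Rightarrow> (int \<Rightarrow> 'a \<Rightarrow> real) \<Rightarrow> bool" where
  "strictly_stationary M X \<longleftrightarrow>
     (\<forall>I k. finite I \<longrightarrow>
        distr M (PiM I (\<lambda>_. borel)) (\<lambda>\<omega>. \<lambda>i\<in>I. X (i + k) \<omega>)
      = distr M (PiM I (\<lambda>_. borel)) (\<lambda>\<omega>. \<lambda>i\<in>I. X i \<omega>))"

definition shift_invariant :: "(int \<Rightarrow> real) set \<Rightarrow> bool" where
  "shift_invariant A \<longleftrightarrow>
     A \<in> sets (PiM UNIV (\<lambda>_::int. (borel :: real measure))) \<and>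
     (\<forall>x. x \<in> A \<longleftrightarrow> (\<lambda>t. x (t + 1)) \<in> A)"

definition ergodic_process :: "'a measure \<Rightarrow> (int \<Rightarrow> 'a \<Rightarrow> real) \<Rightarrow> bool" where
  "ergodic_process M X \<longleftrightarrow>
     (\<forall>A. shift_invariant A \<longrightarrow>
        measure M {\<omega> \<in> space M. (\<lambda>t. X t \<omega>) \<in> A} = 0 \<or>
        measure M {\<omega> \<in> space M. (\<lambda>t. X t \<omega>) \<in> A} = 1)"

definition nz_ind :: "(int \<Rightarrow> 'a \<Rightarrow> real) \<Rightarrow> int \<Rightarrow> 'a \<Rightarrow> real" where
  "nz_ind r t \<omega> = (if r t \<omega> \<noteq> 0 then 1 else 0)"

definition gamma0_hat :: "(int \<Rightarrow> 'a \<Rightarrow> real) \<Rightarrow> nat \<Rightarrow> nat \<Rightarrow> 'a \<Rightarrow> real" where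
  "gamma0_hat r n h \<omega> = (1 / real n) * (\<Sum>t\<in>{int h + 1 .. int n}. r t \<omega> * r (t - int h) \<omega>)"

definition rho0_hat :: "(int \<Rightarrow> 'a \<Rightarrow> real) \<Rightarrow> nat \<Rightarrow> nat \<Rightarrow> 'a \<Rightarrow> real" where
  "rho0_hat r n h \<omega> = gamma0_hat r n h \<omega> / gamma0_hat r n 0 \<omega>"

definition gammaa_hat :: "(int \<Rightarrow> 'a \<Rightarrow> real) \<Rightarrow> nat \<Rightarrow> nat \<Rightarrow> 'a \<Rightarrow> real" where
  "gammaa_hat r n h \<omega> = (1 / real n) * (\<Sum>t\<in>{int h + 1 .. int n}. nz_ind r t \<omega> * nz_ind r (t - int h) \<omega>)"

definition rho_pr_hat :: "(int \<Rightarrow> 'a \<Rightarrow> real) \<Rightarrow> nat \<Rightarrow> nat \<Rightarrow> 'a \<Rightarrow> real" where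
  "rho_pr_hat r n h \<omega> = rho0_hat r n h \<omega> * gammaa_hat r n 0 \<omega> / gammaa_hat r n h \<omega>"

definition cond_exp_event :: "'a measure \<Rightarrow> ('a \<Rightarrow> real) \<Rightarrow> 'a set \<Rightarrow> real" where
  "cond_exp_event M X B = (\<integral>\<omega>. indicator B \<omega> * X \<omega> \<partial>M) / measure M B"

definition both_nz :: "'a measure \<Rightarrow> (int \<Rightarrow> 'a \<Rightarrow> real) \<Rightarrow> int \<Rightarrow> nat \<Rightarrow> 'a set" where
  "both_nz M r t h = {\<omega> \<in> space M. nz_ind r t \<omega> * nz_ind r (t - int h) \<omega> = 1}"

end

theory Submission
  imports Defs "HOL-Real_Asymp.Real_Asymp"
begin


primrec mxs :: "(nat \<Rightarrow> real) \<Rightarrow> nat \<Rightarrow> real" where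
  "mxs s 0 = s 0"
| "mxs s (Suc n) = max (mxs s n) (s (Suc n))"

lemma mxs_ge: "k \<le> n \<Longrightarrow> s k \<le> mxs s n"
  by (induction n) (auto simp: le_Suc_eq max_def)

lemma mxs_attained: "\<exists>k\<le>n. mxs s n = s k"
proof (induction n)
  case 0 then show ?case by auto
next
  case (Suc n)
  then obtain k where "k \<le> n" "mxs s n = s k" by auto
  then show ?case by (cases "mxs s n \<le> s (Suc n)") (auto simp: max_def intro: le_SucI)
qed

lemma mxs_cong: "(\<And>k. k \<le> n \<Longrightarrow> s k = t k) \<Longrightarrow> mxs s n = mxs t n"
  by (induction n) auto

lemma mxs_measurable: "(\<And>k. f k \<in> borel_measurable N) \<Longrightarrow> (\<lambda>x. mxs (\<lambda>k. f k x) n) \<in> borel_measurable N"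
  by (induction n) auto

lemma mxs_abs_bound: "\<bar>mxs s n\<bar> \<le> (\<Sum>k\<le>n. \<bar>s k\<bar>)"
proof (induction n)
  case 0 then show ?case by simp
next
  case (Suc n)
  have "\<bar>s (Suc n)\<bar> \<le> (\<Sum>k\<le>Suc n. \<bar>s k\<bar>)" by (simp add: sum_nonneg)
  moreover have "(\<Sum>k\<le>n. \<bar>s k\<bar>) \<le> (\<Sum>k\<le>Suc n. \<bar>s k\<bar>)" by simp
  ultimately show ?case using Suc by (auto simp: max_def)
qed

lemma avg_bound:
  fixes y :: "nat \<Rightarrow> real"
  assumes K: "\<And>n. (\<Sum>i<n. y i - c) \<le> K" and e: "e > 0"
  shows "eventually (\<lambda>n. (\<Sum>i<n. y i) / real n \<le> c + e) sequentially"
proof -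
  have K0: "K \<ge> 0" using K[of 0] by simp
  show ?thesis unfolding eventually_sequentially
  proof (intro exI allI impI)
    fix n assume n: "nat \<lceil>K / e\<rceil> + 1 \<le> n"
    then have np: "real n > 0" by simp
    have "K / e \<le> real n" using n by linarith
    then have Kn: "K \<le> e * real n" using e by (simp add: field_simps)
    have "(\<Sum>i<n. y i) = (\<Sum>i<n. y i - c) + real n * c" by (simp add: sum_subtractf)
    also have "\<dots> \<le> K + real n * c" using K[of n] by simp
    also have "\<dots> \<le> real n * (c + e)" using Kn by (simp add: algebra_simps)
    finally show "(\<Sum>i<n. y i) / real n \<le> c + e" using np by (simp add: divide_le_eq mult.commute)
  qed
qed

lemma conv_from_bounds:
  fixes f :: "nat \<Rightarrow> real"
  assumes "\<forall>k::nat. eventually (\<lambda>n. \<bar>f n - \<mu>\<bar> \<le> 1 / real (Suc k)) sequentially"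
  shows "f \<longlonglongrightarrow> \<mu>"
proof (rule tendstoI)
  fix e :: real assume "e > 0"
  then obtain k0 where k0: "k0 > 0" "inverse (real k0) < e" using ex_inverse_of_nat_less by blast
  then obtain k where "k0 = Suc k" using gr0_conv_Suc by blast
  with k0 have k: "inverse (real (Suc k)) < e" by simp
  show "eventually (\<lambda>n. dist (f n) \<mu> < e) sequentially"
    using assms[rule_format, of k] by (rule eventually_mono) (use k in \<open>auto simp: dist_real_def divide_inverse\<close>)
qed



lemma birkhoff_upper:
  fixes M :: "'a measure" and Y :: "nat \<Rightarrow> 'a \<Rightarrow> real" and c :: real
  assumes P: "prob_space M"
  and meas[measurable]: "\<And>i. Y i \<in> borel_measurable M"
  and int: "\<And>i. integrable M (Y i)"
  and stat: "\<And>n (F :: (nat \<Rightarrow> real) \<Rightarrow> real). F \<in> borel_measurable (PiM {..<n} (\<lambda>_. borel)) \<Longrightarrow>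
     (\<integral>\<omega>. F (\<lambda>i\<in>{..<n}. Y (Suc i) \<omega>) \<partial>M) = (\<integral>\<omega>. F (\<lambda>i\<in>{..<n}. Y i \<omega>) \<partial>M)"
  and erg: "measure M {\<omega>\<in>space M. \<forall>K::nat. \<exists>n. (\<Sum>i<n. Y i \<omega> - c) > real K} = 0 \<or>
               measure M {\<omega>\<in>space M. \<forall>K::nat. \<exists>n. (\<Sum>i<n. Y i \<omega> - c) > real K} = 1"
  and c: "c > (\<integral>\<omega>. Y 0 \<omega> \<partial>M)"
  shows "AE \<omega> in M. \<exists>K::nat. \<forall>n. (\<Sum>i<n. Y i \<omega> - c) \<le> real K"
proof -
  interpret prob_space M by (rule P)
  define U where "U = {\<omega>\<in>space M. \<forall>K::nat. \<exists>n. (\<Sum>i<n. Y i \<omega> - c) > real K}"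
  have U_sets: "U \<in> sets M" unfolding U_def by measurable
  define S where "S k \<omega> = (\<Sum>i<k. Y i \<omega> - c)" for k \<omega>
  define S' where "S' k \<omega> = (\<Sum>i<k. Y (Suc i) \<omega> - c)" for k \<omega>
  define Mx where "Mx n \<omega> = mxs (\<lambda>k. S k \<omega>) n" for n \<omega>
  define Mx' where "Mx' n \<omega> = mxs (\<lambda>k. S' k \<omega>) n" for n \<omega>
  have S_m[measurable]: "S k \<in> borel_measurable M" for k unfolding S_def by measurable
  have S'_m[measurable]: "S' k \<in> borel_measurable M" for k unfolding S'_def by measurable
  have Mx_m[measurable]: "Mx n \<in> borel_measurable M" for n
    unfolding Mx_def by (rule mxs_measurable) simp
  have Mx'_m[measurable]: "Mx' n \<in> borel_measurable M" for n
    unfolding Mx'_def by (rule mxs_measurable) simp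
  have S_int: "integrable M (S k)" for k unfolding S_def using int by auto
  have S'_int: "integrable M (S' k)" for k unfolding S'_def using int by auto
  have Mx_int: "integrable M (Mx n)" for n
  proof (rule Bochner_Integration.integrable_bound[where f="\<lambda>\<omega>. \<Sum>k\<le>n. \<bar>S k \<omega>\<bar>"])
    show "integrable M (\<lambda>\<omega>. \<Sum>k\<le>n. \<bar>S k \<omega>\<bar>)" using S_int by auto
    show "AE x in M. norm (Mx n x) \<le> norm (\<Sum>k\<le>n. \<bar>S k x\<bar>)"
      using mxs_abs_bound by (auto simp: Mx_def intro!: order.trans[OF _ abs_ge_self])
  qed simp
  have Mx'_int: "integrable M (Mx' n)" for n
  proof (rule Bochner_Integration.integrable_bound[where f="\<lambda>\<omega>. \<Sum>k\<le>n. \<bar>S' k \<omega>\<bar>"])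
    show "integrable M (\<lambda>\<omega>. \<Sum>k\<le>n. \<bar>S' k \<omega>\<bar>)" using S'_int by auto
    show "AE x in M. norm (Mx' n x) \<le> norm (\<Sum>k\<le>n. \<bar>S' k x\<bar>)"
      using mxs_abs_bound by (auto simp: Mx'_def intro!: order.trans[OF _ abs_ge_self])
  qed simp
  have Mx_nn: "Mx n \<omega> \<ge> 0" for n \<omega>
    using mxs_ge[of 0 n "\<lambda>k. S k \<omega>"] by (simp add: Mx_def S_def)
  have Mx'_nn: "Mx' n \<omega> \<ge> 0" for n \<omega>
    using mxs_ge[of 0 n "\<lambda>k. S' k \<omega>"] by (simp add: Mx'_def S'_def)
  have eqint: "(\<integral>\<omega>. Mx' n \<omega> \<partial>M) = (\<integral>\<omega>. Mx n \<omega> \<partial>M)" for n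
  proof -
    define F where "F x = mxs (\<lambda>k. \<Sum>i<min k n. (x i - c)) n" for x :: "nat \<Rightarrow> real"
    have Fm: "F \<in> borel_measurable (PiM {..<n} (\<lambda>_. borel))"
      unfolding F_def by (rule mxs_measurable) measurable
    have 1: "F (\<lambda>i\<in>{..<n}. Y (Suc i) \<omega>) = Mx' n \<omega>" for \<omega>
      unfolding F_def Mx'_def S'_def by (rule mxs_cong) (auto intro!: sum.cong)
    have 2: "F (\<lambda>i\<in>{..<n}. Y i \<omega>) = Mx n \<omega>" for \<omega>
      unfolding F_def Mx_def S_def by (rule mxs_cong) (auto intro!: sum.cong)
    show ?thesis using stat[of F n] Fm 1 2 by simp
  qed
  define B where "B n = {\<omega>\<in>space M. 0 < Mx n \<omega>}" for n
  have B_sets[measurable]: "B n \<in> sets M" for n unfolding B_def by measurable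
  have pw: "indicator (B n) \<omega> * (Y 0 \<omega> - c) \<ge> Mx n \<omega> - Mx' n \<omega>" if "\<omega> \<in> space M" for n \<omega>
  proof (cases "0 < Mx n \<omega>")
    case True
    obtain k where k: "k \<le> n" "Mx n \<omega> = S k \<omega>" using mxs_attained[of n "\<lambda>k. S k \<omega>"] by (auto simp: Mx_def)
    have "k \<noteq> 0" using k True by (cases k) (auto simp: S_def Mx_def)
    then obtain j where j: "k = Suc j" using not0_implies_Suc by blast
    have "S k \<omega> = (Y 0 \<omega> - c) + S' j \<omega>"
      unfolding j S_def S'_def by (rule sum.lessThan_Suc_shift)
    moreover have "S' j \<omega> \<le> Mx' n \<omega>" unfolding Mx'_def by (rule mxs_ge) (use k j in simp)
    ultimately show ?thesis using True that k by (simp add: B_def)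
  next
    case False
    then show ?thesis using Mx_nn[of n \<omega>] Mx'_nn[of n \<omega>] that by (simp add: B_def)
  qed
  have maxineq: "(\<integral>\<omega>. indicator (B n) \<omega> * (Y 0 \<omega> - c) \<partial>M) \<ge> 0" for n
  proof -
    have "0 = (\<integral>\<omega>. Mx n \<omega> - Mx' n \<omega> \<partial>M)"
      using eqint[of n] Mx_int Mx'_int by simp
    also have "\<dots> \<le> (\<integral>\<omega>. indicator (B n) \<omega> * (Y 0 \<omega> - c) \<partial>M)"
    proof (rule integral_mono)
      show "integrable M (\<lambda>\<omega>. indicator (B n) \<omega> * (Y 0 \<omega> - c))"
        using integrable_mult_indicator[OF B_sets, of "\<lambda>\<omega>. Y 0 \<omega> - c"] int[of 0] by simp
    qed (use Mx_int Mx'_int pw in auto)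
    finally show ?thesis .
  qed
  have notone: "measure M U \<noteq> 1"
  proof
    assume "measure M U = 1"
    then have AEU: "AE \<omega> in M. \<omega> \<in> U" using prob_eq_1[OF U_sets] by simp
    have lim: "(\<lambda>n. \<integral>\<omega>. indicator (B n) \<omega> * (Y 0 \<omega> - c) \<partial>M) \<longlonglongrightarrow> (\<integral>\<omega>. Y 0 \<omega> - c \<partial>M)"
    proof (rule integral_dominated_convergence[where w="\<lambda>\<omega>. \<bar>Y 0 \<omega> - c\<bar>"])
      show "integrable M (\<lambda>\<omega>. \<bar>Y 0 \<omega> - c\<bar>)" using int[of 0] by auto
      show "AE x in M. norm (indicator (B n) x * (Y 0 x - c)) \<le> \<bar>Y 0 x - c\<bar>" for n
        by (auto split: split_indicator)
      show "AE x in M. (\<lambda>n. indicator (B n) x * (Y 0 x - c)) \<longlonglongrightarrow> Y 0 x - c"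
        using AEU
      proof eventually_elim
        case (elim \<omega>)
        then have "\<exists>n. real 0 < (\<Sum>i<n. Y i \<omega> - c)" unfolding U_def by blast
        then obtain k where k: "S k \<omega> > 0" unfolding S_def by auto
        have "eventually (\<lambda>n. indicator (B n) \<omega> * (Y 0 \<omega> - c) = Y 0 \<omega> - c) sequentially"
          unfolding eventually_sequentially
        proof (intro exI allI impI)
          fix n assume "k \<le> n"
          then have "S k \<omega> \<le> Mx n \<omega>" unfolding Mx_def by (rule mxs_ge)
          then show "indicator (B n) \<omega> * (Y 0 \<omega> - c) = Y 0 \<omega> - c"
            using k elim by (auto simp: B_def U_def)
        qed
        then show ?case by (rule tendsto_eventually)
      qed
    qed simp_all
    have "0 \<le> (\<integral>\<omega>. Y 0 \<omega> - c \<partial>M)"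
      by (rule LIMSEQ_le_const[OF lim]) (use maxineq in auto)
    also have "\<dots> = (\<integral>\<omega>. Y 0 \<omega> \<partial>M) - c" using int[of 0] by (simp add: prob_space)
    finally show False using c by simp
  qed
  then have "measure M U = 0" using erg unfolding U_def by blast
  then have "AE \<omega> in M. \<omega> \<notin> U" using prob_eq_0[OF U_sets] by simp
  then show ?thesis using AE_space
    by eventually_elim (auto simp: U_def not_less)
qed



lemma birkhoff:
  fixes M :: "'a measure" and Y :: "nat \<Rightarrow> 'a \<Rightarrow> real"
  assumes P: "prob_space M"
  and meas[measurable]: "\<And>i. Y i \<in> borel_measurable M"
  and int: "\<And>i. integrable M (Y i)"
  and stat: "\<And>n (F :: (nat \<Rightarrow> real) \<Rightarrow> real). F \<in> borel_measurable (PiM {..<n} (\<lambda>_. borel)) \<Longrightarrow>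
     (\<integral>\<omega>. F (\<lambda>i\<in>{..<n}. Y (Suc i) \<omega>) \<partial>M) = (\<integral>\<omega>. F (\<lambda>i\<in>{..<n}. Y i \<omega>) \<partial>M)"
  and erg: "\<And>c. measure M {\<omega>\<in>space M. \<forall>K::nat. \<exists>n. (\<Sum>i<n. Y i \<omega> - c) > real K} = 0 \<or>
               measure M {\<omega>\<in>space M. \<forall>K::nat. \<exists>n. (\<Sum>i<n. Y i \<omega> - c) > real K} = 1"
  and stat': "\<And>n (F :: (nat \<Rightarrow> real) \<Rightarrow> real). F \<in> borel_measurable (PiM {..<n} (\<lambda>_. borel)) \<Longrightarrow>
     (\<integral>\<omega>. F (\<lambda>i\<in>{..<n}. - Y (Suc i) \<omega>) \<partial>M) = (\<integral>\<omega>. F (\<lambda>i\<in>{..<n}. - Y i \<omega>) \<partial>M)"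
  and erg': "\<And>c. measure M {\<omega>\<in>space M. \<forall>K::nat. \<exists>n. (\<Sum>i<n. - Y i \<omega> - c) > real K} = 0 \<or>
               measure M {\<omega>\<in>space M. \<forall>K::nat. \<exists>n. (\<Sum>i<n. - Y i \<omega> - c) > real K} = 1"
  shows "AE \<omega> in M. (\<lambda>n. (\<Sum>i<n. Y i \<omega>) / real n) \<longlonglongrightarrow> (\<integral>\<omega>. Y 0 \<omega> \<partial>M)"
proof -
  interpret prob_space M by (rule P)
  obtain \<mu> where \<mu>_def: "\<mu> = (\<integral>\<omega>. Y 0 \<omega> \<partial>M)" by blast
  have k: "AE \<omega> in M. eventually (\<lambda>n. \<bar>(\<Sum>i<n. Y i \<omega>) / real n - \<mu>\<bar> \<le> 1 / real (Suc k)) sequentially" for k :: nat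
  proof -
    define e where "e = 1 / (2 * real (Suc k))"
    have e: "e > 0" by (simp add: e_def)
    have up: "AE \<omega> in M. \<exists>K::nat. \<forall>n. (\<Sum>i<n. Y i \<omega> - (\<mu> + e)) \<le> real K"
      by (rule birkhoff_upper[OF P meas int stat erg]) (use e \<mu>_def in simp_all)
    have lo: "AE \<omega> in M. \<exists>K::nat. \<forall>n. (\<Sum>i<n. - Y i \<omega> - (- \<mu> + e)) \<le> real K"
      by (rule birkhoff_upper[where Y="\<lambda>i \<omega>. - Y i \<omega>", OF P _ _ stat' erg']) (use e int in \<open>simp_all add: \<mu>_def\<close>)
    from up lo show ?thesis
    proof eventually_elim
      case (elim \<omega>)
      from elim obtain K1 K2 :: nat where K1: "\<And>n. (\<Sum>i<n. Y i \<omega> - (\<mu> + e)) \<le> real K1"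
        and K2: "\<And>n. (\<Sum>i<n. - Y i \<omega> - (- \<mu> + e)) \<le> real K2" by blast
      have e1: "eventually (\<lambda>n. (\<Sum>i<n. Y i \<omega>) / real n \<le> (\<mu> + e) + e) sequentially"
        by (rule avg_bound[OF K1 e])
      have e2: "eventually (\<lambda>n. (\<Sum>i<n. - Y i \<omega>) / real n \<le> (- \<mu> + e) + e) sequentially"
        by (rule avg_bound[OF K2 e])
      from e1 e2 show ?case
      proof eventually_elim
        case (elim n)
        have "(\<Sum>i<n. - Y i \<omega>) / real n = - ((\<Sum>i<n. Y i \<omega>) / real n)" by (simp add: sum_negf)
        with elim have "\<bar>(\<Sum>i<n. Y i \<omega>) / real n - \<mu>\<bar> \<le> 2 * e" by linarith
        moreover have "2 * e = 1 / real (Suc k)" by (simp add: e_def field_simps)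
        ultimately show ?case by simp
      qed
    qed
  qed
  have "AE \<omega> in M. \<forall>k::nat. eventually (\<lambda>n. \<bar>(\<Sum>i<n. Y i \<omega>) / real n - \<mu>\<bar> \<le> 1 / real (Suc k)) sequentially"
    using k by (simp add: AE_all_countable)
  then show ?thesis unfolding \<mu>_def by eventually_elim (rule conv_from_bounds)
qed



lemma stationary_integral:
  fixes X :: "int \<Rightarrow> 'a \<Rightarrow> real" and G :: "(int \<Rightarrow> real) \<Rightarrow> real"
  assumes st: "strictly_stationary M X" and I: "finite I" and Xm: "\<And>t. X t \<in> borel_measurable M"
    and G: "G \<in> borel_measurable (PiM I (\<lambda>_. borel))"
  shows "(\<integral>\<omega>. G (\<lambda>i\<in>I. X (i + k) \<omega>) \<partial>M) = (\<integral>\<omega>. G (\<lambda>i\<in>I. X i \<omega>) \<partial>M)"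
proof -
  have d: "distr M (PiM I (\<lambda>_. borel)) (\<lambda>\<omega>. \<lambda>i\<in>I. X (i + k) \<omega>) = distr M (PiM I (\<lambda>_. borel)) (\<lambda>\<omega>. \<lambda>i\<in>I. X i \<omega>)"
    using st I unfolding strictly_stationary_def by blast
  have m1: "(\<lambda>\<omega>. \<lambda>i\<in>I. X (i + k) \<omega>) \<in> measurable M (PiM I (\<lambda>_. borel))"
    by (rule measurable_restrict) (rule Xm)
  have m2: "(\<lambda>\<omega>. \<lambda>i\<in>I. X i \<omega>) \<in> measurable M (PiM I (\<lambda>_. borel))"
    by (rule measurable_restrict) (rule Xm)
  have "(\<integral>\<omega>. G (\<lambda>i\<in>I. X (i + k) \<omega>) \<partial>M) = integral\<^sup>L (distr M (PiM I (\<lambda>_. borel)) (\<lambda>\<omega>. \<lambda>i\<in>I. X (i + k) \<omega>)) G"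
    by (rule integral_distr[OF m1 G, symmetric])
  also have "\<dots> = integral\<^sup>L (distr M (PiM I (\<lambda>_. borel)) (\<lambda>\<omega>. \<lambda>i\<in>I. X i \<omega>)) G" by (simp only: d)
  also have "\<dots> = (\<integral>\<omega>. G (\<lambda>i\<in>I. X i \<omega>) \<partial>M)" by (rule integral_distr[OF m2 G])
  finally show ?thesis .
qed

lemma q_meas:
  fixes q :: "real \<Rightarrow> real \<Rightarrow> real"
  assumes q: "(\<lambda>p. q (fst p) (snd p)) \<in> borel_measurable (borel \<Otimes>\<^sub>M borel)"
    and f: "f \<in> borel_measurable N" and g: "g \<in> borel_measurable N"
  shows "(\<lambda>x. q (f x) (g x)) \<in> borel_measurable N"
  using measurable_compose[OF measurable_Pair[OF f g] q] by simp

lemma Y_stat: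
  fixes r :: "int \<Rightarrow> 'a \<Rightarrow> real" and q :: "real \<Rightarrow> real \<Rightarrow> real" and h :: nat
    and F :: "(nat \<Rightarrow> real) \<Rightarrow> real"
  assumes st: "strictly_stationary M r" and rm: "\<And>t. r t \<in> borel_measurable M"
    and q: "(\<lambda>p. q (fst p) (snd p)) \<in> borel_measurable (borel \<Otimes>\<^sub>M borel)"
    and F: "F \<in> borel_measurable (PiM {..<n} (\<lambda>_. borel))"
  shows "(\<integral>\<omega>. F (\<lambda>i\<in>{..<n}. q (r (int (Suc i) + int h + 1) \<omega>) (r (int (Suc i) + 1) \<omega>)) \<partial>M)
       = (\<integral>\<omega>. F (\<lambda>i\<in>{..<n}. q (r (int i + int h + 1) \<omega>) (r (int i + 1) \<omega>)) \<partial>M)"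
proof -
  define I where "I = {1 .. int n + int h}"
  define G where "G z = F (\<lambda>i\<in>{..<n}. q (z (int i + int h + 1)) (z (int i + 1)))" for z :: "int \<Rightarrow> real"
  have Gm: "G \<in> borel_measurable (PiM I (\<lambda>_. borel))"
    unfolding G_def
    apply (rule measurable_compose[OF _ F])
    apply (rule measurable_restrict)
    apply (rule q_meas[OF q])
     apply (rule measurable_component_singleton; auto simp: I_def)+
    done
  have 1: "G (\<lambda>j\<in>I. r (j + 1) \<omega>) = F (\<lambda>i\<in>{..<n}. q (r (int (Suc i) + int h + 1) \<omega>) (r (int (Suc i) + 1) \<omega>))" for \<omega>
    unfolding G_def by (rule arg_cong[where f=F], rule restrict_ext) (auto simp: I_def algebra_simps)
  have 2: "G (\<lambda>j\<in>I. r j \<omega>) = F (\<lambda>i\<in>{..<n}. q (r (int i + int h + 1) \<omega>) (r (int i + 1) \<omega>))" for \<omega>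
    unfolding G_def by (rule arg_cong[where f=F], rule restrict_ext) (auto simp: I_def algebra_simps)
  show ?thesis using stationary_integral[OF st _ rm Gm, of 1] 1 2 by (simp add: I_def)
qed

lemma unbdd_shift:
  fixes s :: "nat \<Rightarrow> real"
  shows "(\<forall>K::nat. \<exists>n. (\<Sum>i<n. s (Suc i)) > real K) \<longleftrightarrow> (\<forall>K::nat. \<exists>n. (\<Sum>i<n. s i) > real K)"
proof
  assume H: "\<forall>K::nat. \<exists>n. (\<Sum>i<n. s (Suc i)) > real K"
  show "\<forall>K::nat. \<exists>n. (\<Sum>i<n. s i) > real K"
  proof
    fix K :: nat
    obtain n where n: "(\<Sum>i<n. s (Suc i)) > real (K + nat \<lceil>\<bar>s 0\<bar>\<rceil>)" using H by blast
    have "(\<Sum>i<Suc n. s i) = s 0 + (\<Sum>i<n. s (Suc i))" by (rule sum.lessThan_Suc_shift)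
    moreover have "real (nat \<lceil>\<bar>s 0\<bar>\<rceil>) \<ge> \<bar>s 0\<bar>" by linarith
    ultimately have "(\<Sum>i<Suc n. s i) > real K" using n by simp linarith
    then show "\<exists>n. (\<Sum>i<n. s i) > real K" by blast
  qed
next
  assume H: "\<forall>K::nat. \<exists>n. (\<Sum>i<n. s i) > real K"
  show "\<forall>K::nat. \<exists>n. (\<Sum>i<n. s (Suc i)) > real K"
  proof
    fix K :: nat
    obtain n where n: "(\<Sum>i<n. s i) > real (K + nat \<lceil>\<bar>s 0\<bar>\<rceil>)" using H by blast
    have "n \<noteq> 0"
    proof
      assume "n = 0"
      then have "real (K + nat \<lceil>\<bar>s 0\<bar>\<rceil>) < 0" using n by simp
      then show False by (simp only: of_nat_less_0_iff)
    qed
    then obtain m where m: "n = Suc m" using not0_implies_Suc by blast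
    have "(\<Sum>i<Suc m. s i) = s 0 + (\<Sum>i<m. s (Suc i))" by (rule sum.lessThan_Suc_shift)
    moreover have "real (nat \<lceil>\<bar>s 0\<bar>\<rceil>) \<ge> \<bar>s 0\<bar>" by linarith
    ultimately have "(\<Sum>i<m. s (Suc i)) > real K" using n m by simp linarith
    then show "\<exists>n. (\<Sum>i<n. s (Suc i)) > real K" by blast
  qed
qed

lemma Y_erg:
  fixes r :: "int \<Rightarrow> 'a \<Rightarrow> real" and q :: "real \<Rightarrow> real \<Rightarrow> real" and h :: nat
  assumes erg: "ergodic_process M r"
    and q: "(\<lambda>p. q (fst p) (snd p)) \<in> borel_measurable (borel \<Otimes>\<^sub>M borel)"
  shows "measure M {\<omega>\<in>space M. \<forall>K::nat. \<exists>n. (\<Sum>i<n. q (r (int i + int h + 1) \<omega>) (r (int i + 1) \<omega>) - c) > real K} = 0 \<or>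
         measure M {\<omega>\<in>space M. \<forall>K::nat. \<exists>n. (\<Sum>i<n. q (r (int i + int h + 1) \<omega>) (r (int i + 1) \<omega>) - c) > real K} = 1"
proof -
  define T where "T x n = (\<Sum>i<n. q (x (int i + int h + 1)) (x (int i + 1)) - c)" for x :: "int \<Rightarrow> real" and n
  define A where "A = {x. \<forall>K::nat. \<exists>n. T x n > real K}"
  have qm[measurable]: "(\<lambda>x. q (x a) (x b)) \<in> borel_measurable (PiM UNIV (\<lambda>_::int. borel))" for a b
    by (rule q_meas[OF q]) (rule measurable_component_singleton; simp)+
  have Tm[measurable]: "(\<lambda>x. T x n) \<in> borel_measurable (PiM UNIV (\<lambda>_::int. borel))" for n
    unfolding T_def by measurable
  have "shift_invariant A"
    unfolding shift_invariant_def
  proof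
    have "A = {x \<in> space (PiM UNIV (\<lambda>_::int. (borel :: real measure))). \<forall>K::nat. \<exists>n. T x n > real K}"
      by (simp add: A_def space_PiM)
    also have "\<dots> \<in> sets (PiM UNIV (\<lambda>_::int. borel))" by measurable
    finally show "A \<in> sets (PiM UNIV (\<lambda>_::int. borel))" .
    show "\<forall>x. (x \<in> A) = ((\<lambda>t. x (t + 1)) \<in> A)"
    proof
      fix x :: "int \<Rightarrow> real"
      define s where "s i = q (x (int i + int h + 1)) (x (int i + 1)) - c" for i :: nat
      have "T (\<lambda>t. x (t + 1)) n = (\<Sum>i<n. s (Suc i))" for n
        unfolding T_def s_def by (rule sum.cong) (auto simp: algebra_simps)
      moreover have "T x n = (\<Sum>i<n. s i)" for n unfolding T_def s_def by simp
      ultimately show "(x \<in> A) = ((\<lambda>t. x (t + 1)) \<in> A)"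
        unfolding A_def using unbdd_shift[of s] by simp
    qed
  qed
  then have "measure M {\<omega> \<in> space M. (\<lambda>t. r t \<omega>) \<in> A} = 0 \<or> measure M {\<omega> \<in> space M. (\<lambda>t. r t \<omega>) \<in> A} = 1"
    using erg unfolding ergodic_process_def by blast
  moreover have "{\<omega> \<in> space M. (\<lambda>t. r t \<omega>) \<in> A} = {\<omega>\<in>space M. \<forall>K::nat. \<exists>n. (\<Sum>i<n. q (r (int i + int h + 1) \<omega>) (r (int i + 1) \<omega>) - c) > real K}"
    by (simp add: A_def T_def)
  ultimately show ?thesis by simp
qed

lemma sum_reidx:
  fixes f :: "int \<Rightarrow> real"
  shows "(\<Sum>t\<in>{int h + 1 .. int (n + h)}. f t) = (\<Sum>i<n. f (int i + int h + 1))"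
  by (rule sum.reindex_bij_witness[of _ "\<lambda>i. int i + int h + 1" "\<lambda>t. nat (t - int h - 1)"]) auto

lemma ratio_lim: "(\<lambda>n. real n / real (n + h)) \<longlonglongrightarrow> 1"
  by real_asymp



lemma sample_mean:
  fixes M :: "'a measure" and r :: "int \<Rightarrow> 'a \<Rightarrow> real" and q :: "real \<Rightarrow> real \<Rightarrow> real" and h :: nat
  assumes P: "prob_space M" and rm: "\<And>t. r t \<in> borel_measurable M"
    and st: "strictly_stationary M r" and erg: "ergodic_process M r"
    and q: "(\<lambda>p. q (fst p) (snd p)) \<in> borel_measurable (borel \<Otimes>\<^sub>M borel)"
    and qint: "\<And>a b. integrable M (\<lambda>\<omega>. q (r a \<omega>) (r b \<omega>))"
  shows "AE \<omega> in M. (\<lambda>n. (1 / real n) * (\<Sum>t\<in>{int h + 1 .. int n}. q (r t \<omega>) (r (t - int h) \<omega>)))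
           \<longlonglongrightarrow> (\<integral>\<omega>. q (r (int h + 1) \<omega>) (r 1 \<omega>) \<partial>M)"
proof -
  define Y where "Y i \<omega> = q (r (int i + int h + 1) \<omega>) (r (int i + 1) \<omega>)" for i \<omega>
  have q': "(\<lambda>p. - q (fst p) (snd p)) \<in> borel_measurable (borel \<Otimes>\<^sub>M borel)" using q by simp
  have Ym: "\<And>i. Y i \<in> borel_measurable M" unfolding Y_def by (rule q_meas[OF q rm rm])
  have Yint: "\<And>i. integrable M (Y i)" unfolding Y_def by (rule qint)
  have Ys: "\<And>n (F :: (nat \<Rightarrow> real) \<Rightarrow> real). F \<in> borel_measurable (PiM {..<n} (\<lambda>_. borel)) \<Longrightarrow>
     (\<integral>\<omega>. F (\<lambda>i\<in>{..<n}. Y (Suc i) \<omega>) \<partial>M) = (\<integral>\<omega>. F (\<lambda>i\<in>{..<n}. Y i \<omega>) \<partial>M)"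
    unfolding Y_def by (rule Y_stat[OF st rm q])
  have Ys': "\<And>n (F :: (nat \<Rightarrow> real) \<Rightarrow> real). F \<in> borel_measurable (PiM {..<n} (\<lambda>_. borel)) \<Longrightarrow>
     (\<integral>\<omega>. F (\<lambda>i\<in>{..<n}. - Y (Suc i) \<omega>) \<partial>M) = (\<integral>\<omega>. F (\<lambda>i\<in>{..<n}. - Y i \<omega>) \<partial>M)"
    unfolding Y_def by (rule Y_stat[OF st rm q'])
  have Ye: "\<And>c. measure M {\<omega>\<in>space M. \<forall>K::nat. \<exists>n. (\<Sum>i<n. Y i \<omega> - c) > real K} = 0 \<or>
               measure M {\<omega>\<in>space M. \<forall>K::nat. \<exists>n. (\<Sum>i<n. Y i \<omega> - c) > real K} = 1"
    unfolding Y_def by (rule Y_erg[OF erg q])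
  have Ye': "\<And>c. measure M {\<omega>\<in>space M. \<forall>K::nat. \<exists>n. (\<Sum>i<n. - Y i \<omega> - c) > real K} = 0 \<or>
               measure M {\<omega>\<in>space M. \<forall>K::nat. \<exists>n. (\<Sum>i<n. - Y i \<omega> - c) > real K} = 1"
    unfolding Y_def by (rule Y_erg[OF erg q'])
  have B: "AE \<omega> in M. (\<lambda>n. (\<Sum>i<n. Y i \<omega>) / real n) \<longlonglongrightarrow> (\<integral>\<omega>. Y 0 \<omega> \<partial>M)"
    by (rule birkhoff[OF P Ym Yint Ys Ye Ys' Ye'])
  have Y0: "(\<integral>\<omega>. Y 0 \<omega> \<partial>M) = (\<integral>\<omega>. q (r (int h + 1) \<omega>) (r 1 \<omega>) \<partial>M)" by (simp add: Y_def)
  show ?thesis using B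
  proof eventually_elim
    case (elim \<omega>)
    define g where "g n = (1 / real n) * (\<Sum>t\<in>{int h + 1 .. int n}. q (r t \<omega>) (r (t - int h) \<omega>))" for n
    have "(\<lambda>n. g (n + h)) = (\<lambda>n. (\<Sum>i<n. Y i \<omega>) / real n * (real n / real (n + h)))"
    proof
      fix n
      have gn: "g (n + h) = (1 / real (n + h)) * (\<Sum>i<n. Y i \<omega>)"
        unfolding g_def sum_reidx by (simp add: Y_def)
      then show "g (n + h) = (\<Sum>i<n. Y i \<omega>) / real n * (real n / real (n + h))"
      proof (cases "n = 0")
        case False
        then have "(\<Sum>i<n. Y i \<omega>) / real n * (real n / real (n + h)) = (\<Sum>i<n. Y i \<omega>) / real (n + h)"
          by simp
        then show ?thesis using gn by simp
      qed (use gn in simp)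
    qed
    moreover have "(\<lambda>n. (\<Sum>i<n. Y i \<omega>) / real n * (real n / real (n + h))) \<longlonglongrightarrow> (\<integral>\<omega>. Y 0 \<omega> \<partial>M) * 1"
      by (rule tendsto_mult[OF elim ratio_lim])
    ultimately have "(\<lambda>n. g (n + h)) \<longlonglongrightarrow> (\<integral>\<omega>. Y 0 \<omega> \<partial>M)" by simp
    then have "g \<longlonglongrightarrow> (\<integral>\<omega>. Y 0 \<omega> \<partial>M)" by (rule LIMSEQ_offset)
    then show ?case unfolding g_def Y0 .
  qed
qed



lemma stat2:
  fixes r :: "int \<Rightarrow> 'a \<Rightarrow> real" and q :: "real \<Rightarrow> real \<Rightarrow> real" and h :: nat
  assumes st: "strictly_stationary M r" and rm: "\<And>t. r t \<in> borel_measurable M"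
    and q: "(\<lambda>p. q (fst p) (snd p)) \<in> borel_measurable (borel \<Otimes>\<^sub>M borel)"
  shows "(\<integral>\<omega>. q (r t \<omega>) (r (t - int h) \<omega>) \<partial>M) = (\<integral>\<omega>. q (r (int h + 1) \<omega>) (r 1 \<omega>) \<partial>M)"
proof -
  define I where "I = {1, int h + 1}"
  define G where "G z = q (z (int h + 1)) (z 1)" for z :: "int \<Rightarrow> real"
  have Gm: "G \<in> borel_measurable (PiM I (\<lambda>_. borel))"
    unfolding G_def by (rule q_meas[OF q]; rule measurable_component_singleton; simp add: I_def)
  have "(\<integral>\<omega>. G (\<lambda>i\<in>I. r (i + (t - int h - 1)) \<omega>) \<partial>M) = (\<integral>\<omega>. G (\<lambda>i\<in>I. r i \<omega>) \<partial>M)"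
    by (rule stationary_integral[OF st _ rm Gm]) (simp add: I_def)
  then show ?thesis by (simp add: G_def I_def algebra_simps)
qed

lemma abs_mult_le_sq: "\<bar>x * y\<bar> \<le> x\<^sup>2 + y\<^sup>2" for x y :: real
proof -
  have "0 \<le> (\<bar>x\<bar> - \<bar>y\<bar>)\<^sup>2" by simp
  then have "2 * (\<bar>x\<bar> * \<bar>y\<bar>) \<le> \<bar>x\<bar>\<^sup>2 + \<bar>y\<bar>\<^sup>2" by (simp add: power2_diff)
  moreover have "0 \<le> \<bar>x\<bar> * \<bar>y\<bar>" by simp
  moreover have "\<bar>x\<bar>\<^sup>2 = x\<^sup>2" "\<bar>y\<bar>\<^sup>2 = y\<^sup>2" by simp_all
  ultimately show ?thesis unfolding abs_mult by linarith
qed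

theorem proposition1:
  fixes M :: "'a measure" and eps :: "int \<Rightarrow> 'a \<Rightarrow> real" and \<sigma> :: real and m :: nat
  defines "r \<equiv> (\<lambda>t \<omega>. \<sigma> * eps t \<omega>)"
  assumes "prob_space M"
    and "m \<ge> 1"
    and "\<sigma> > 0"
    and meas: "\<And>t. eps t \<in> borel_measurable M"
    and "\<And>t. cond_exp_event M (eps t) (both_nz M r t 0) = 0"
    and "\<And>t. cond_exp_event M (\<lambda>\<omega>. (eps t \<omega>)\<^sup>2) (both_nz M r t 0) = 1"
    and "\<And>t h. h \<le> m \<Longrightarrow> measure M (both_nz M r t h) > 0"
    and "strictly_stationary M r"
    and "ergodic_process M r"
    and "\<And>t. integrable M (\<lambda>\<omega>. (r t \<omega>)\<^sup>2)"
    and "\<And>t. (\<integral>\<omega>. r t \<omega> \<partial>M) = 0"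
  shows "\<forall>t. AE \<omega> in M. \<forall>h\<in>{1..m}.
           (\<lambda>n. rho_pr_hat r n h \<omega>)
             \<longlonglongrightarrow> cond_exp_event M (\<lambda>\<omega>. eps t \<omega> * eps (t - int h) \<omega>) (both_nz M r t h)"
proof
  fix t :: int
  have rdef: "r = (\<lambda>t \<omega>. \<sigma> * eps t \<omega>)" using assms(1) by simp
  interpret prob_space M by (rule assms(2))
  have sig: "\<sigma> > 0" by (rule assms(4))
  have rm[measurable]: "r s \<in> borel_measurable M" for s
    unfolding rdef using meas[of s] by measurable
  have st: "strictly_stationary M r" by (rule assms(9))
  have erg: "ergodic_process M r" by (rule assms(10))
  define q1 where "q1 = (\<lambda>(x::real) (y::real). x * y)"
  define q2 where "q2 = (\<lambda>(x::real) (y::real). (if x \<noteq> 0 then 1 else 0) * (if y \<noteq> 0 then (1::real) else 0))"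
  have q1m: "(\<lambda>p. q1 (fst p) (snd p)) \<in> borel_measurable (borel \<Otimes>\<^sub>M borel)"
    unfolding q1_def by measurable
  have q2m: "(\<lambda>p. q2 (fst p) (snd p)) \<in> borel_measurable (borel \<Otimes>\<^sub>M borel)"
    unfolding q2_def by measurable
  have q1i: "integrable M (\<lambda>\<omega>. q1 (r a \<omega>) (r b \<omega>))" for a b
    unfolding q1_def
    by (rule Bochner_Integration.integrable_bound[where f="\<lambda>\<omega>. (r a \<omega>)\<^sup>2 + (r b \<omega>)\<^sup>2"])
      (use assms(11) abs_mult_le_sq in auto)
  have q2i: "integrable M (\<lambda>\<omega>. q2 (r a \<omega>) (r b \<omega>))" for a b
    by (rule Bochner_Integration.integrable_bound[where f="\<lambda>_. 1::real"])
      (auto simp: q2_def intro: q_meas[OF q2m[unfolded q2_def]])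
  have L1: "AE \<omega> in M. (\<lambda>n. gamma0_hat r n h \<omega>) \<longlonglongrightarrow> (\<integral>\<omega>. q1 (r (int h + 1) \<omega>) (r 1 \<omega>) \<partial>M)" for h
  proof -
    have "(\<lambda>n. gamma0_hat r n h \<omega>) = (\<lambda>n. (1 / real n) * (\<Sum>s\<in>{int h + 1 .. int n}. q1 (r s \<omega>) (r (s - int h) \<omega>)))" for \<omega>
      by (simp add: gamma0_hat_def q1_def)
    then show ?thesis using sample_mean[OF assms(2) rm st erg q1m q1i, of h] by simp
  qed
  have L2: "AE \<omega> in M. (\<lambda>n. gammaa_hat r n h \<omega>) \<longlonglongrightarrow> (\<integral>\<omega>. q2 (r (int h + 1) \<omega>) (r 1 \<omega>) \<partial>M)" for h
  proof -
    have "(\<lambda>n. gammaa_hat r n h \<omega>) = (\<lambda>n. (1 / real n) * (\<Sum>s\<in>{int h + 1 .. int n}. q2 (r s \<omega>) (r (s - int h) \<omega>)))" for \<omega>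
      by (simp add: gammaa_hat_def q2_def nz_ind_def)
    then show ?thesis using sample_mean[OF assms(2) rm st erg q2m q2i, of h] by simp
  qed
  have both_sets: "both_nz M r s h \<in> sets M" for s h
    unfolding both_nz_def nz_ind_def by measurable
  have both_eq: "measure M (both_nz M r s h) = (\<integral>\<omega>. q2 (r s \<omega>) (r (s - int h) \<omega>) \<partial>M)" for s h
  proof -
    have "measure M (both_nz M r s h) = (\<integral>\<omega>. indicator (both_nz M r s h) \<omega> \<partial>M)"
      using sets.sets_into_space[OF both_sets[of s h]] by (simp add: Int_absorb2)
    also have "\<dots> = (\<integral>\<omega>. q2 (r s \<omega>) (r (s - int h) \<omega>) \<partial>M)"
      by (rule Bochner_Integration.integral_cong[OF refl]) (auto simp: both_nz_def nz_ind_def q2_def indicator_def)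
    finally show ?thesis .
  qed
  have PA: "(\<integral>\<omega>. q2 (r (int h + 1) \<omega>) (r 1 \<omega>) \<partial>M) = measure M (both_nz M r s h)" for s h
    using stat2[OF st rm q2m, of s h] both_eq[of s h] by simp
  have Ind: "indicator (both_nz M r s h) \<omega> * (eps s \<omega> * eps (s - int h) \<omega>) = eps s \<omega> * eps (s - int h) \<omega>"
    if "\<omega> \<in> space M" for s h \<omega>
    using that sig by (auto simp: both_nz_def nz_ind_def indicator_def rdef)
  have GH: "(\<integral>\<omega>. q1 (r (int h + 1) \<omega>) (r 1 \<omega>) \<partial>M)
      = \<sigma>\<^sup>2 * (\<integral>\<omega>. indicator (both_nz M r s h) \<omega> * (eps s \<omega> * eps (s - int h) \<omega>) \<partial>M)" for s h
  proof -
    have "(\<integral>\<omega>. q1 (r (int h + 1) \<omega>) (r 1 \<omega>) \<partial>M) = (\<integral>\<omega>. q1 (r s \<omega>) (r (s - int h) \<omega>) \<partial>M)"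
      using stat2[OF st rm q1m, of s h] by simp
    also have "\<dots> = (\<integral>\<omega>. \<sigma>\<^sup>2 * (eps s \<omega> * eps (s - int h) \<omega>) \<partial>M)"
      by (rule Bochner_Integration.integral_cong[OF refl]) (auto simp: q1_def rdef power2_eq_square)
    also have "\<dots> = \<sigma>\<^sup>2 * (\<integral>\<omega>. eps s \<omega> * eps (s - int h) \<omega> \<partial>M)" by simp
    also have "(\<integral>\<omega>. eps s \<omega> * eps (s - int h) \<omega> \<partial>M) = (\<integral>\<omega>. indicator (both_nz M r s h) \<omega> * (eps s \<omega> * eps (s - int h) \<omega>) \<partial>M)"
      by (rule Bochner_Integration.integral_cong[OF refl]) (use Ind in auto)
    finally show ?thesis .
  qed
  have P0pos: "measure M (both_nz M r 1 0) > 0" using assms(8)[of 0 1] by simp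
  have G0: "(\<integral>\<omega>. q1 (r (int 0 + 1) \<omega>) (r 1 \<omega>) \<partial>M) = \<sigma>\<^sup>2 * measure M (both_nz M r 1 0)"
  proof -
    have c: "cond_exp_event M (\<lambda>\<omega>. (eps 1 \<omega>)\<^sup>2) (both_nz M r 1 0) = 1" by (rule assms(7))
    have "(\<integral>\<omega>. indicator (both_nz M r 1 0) \<omega> * (eps 1 \<omega>)\<^sup>2 \<partial>M) = measure M (both_nz M r 1 0)"
      using c P0pos unfolding cond_exp_event_def by (simp add: divide_eq_1_iff)
    moreover have "(\<integral>\<omega>. indicator (both_nz M r 1 0) \<omega> * (eps 1 \<omega>)\<^sup>2 \<partial>M) = \<sigma>\<^sup>2 * (\<integral>\<omega>. indicator (both_nz M r 1 0) \<omega> * (eps 1 \<omega>)\<^sup>2 \<partial>M) / \<sigma>\<^sup>2"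
      using sig by simp
    moreover have "(\<integral>\<omega>. q1 (r (int 0 + 1) \<omega>) (r 1 \<omega>) \<partial>M) = \<sigma>\<^sup>2 * (\<integral>\<omega>. indicator (both_nz M r 1 0) \<omega> * (eps 1 \<omega> * eps (1 - int 0) \<omega>) \<partial>M)"
      by (rule GH)
    ultimately show ?thesis by (simp add: power2_eq_square)
  qed
  have main: "AE \<omega> in M. (\<lambda>n. rho_pr_hat r n h \<omega>)
             \<longlonglongrightarrow> cond_exp_event M (\<lambda>\<omega>. eps t \<omega> * eps (t - int h) \<omega>) (both_nz M r t h)"
    if h: "h \<in> {1..m}" for h
  proof -
    have Phpos: "measure M (both_nz M r t h) > 0" using assms(8)[of h t] h by simp
    define E where "E = (\<integral>\<omega>. indicator (both_nz M r t h) \<omega> * (eps t \<omega> * eps (t - int h) \<omega>) \<partial>M)"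
    have lim_eq: "(\<sigma>\<^sup>2 * E) / (\<sigma>\<^sup>2 * measure M (both_nz M r 1 0)) * measure M (both_nz M r 1 0) / measure M (both_nz M r t h)
        = cond_exp_event M (\<lambda>\<omega>. eps t \<omega> * eps (t - int h) \<omega>) (both_nz M r t h)"
      using sig P0pos Phpos by (simp add: cond_exp_event_def E_def)
    from L1[of h] L1[of 0] L2[of 0] L2[of h] show ?thesis
    proof eventually_elim
      case (elim \<omega>)
      have "(\<lambda>n. gamma0_hat r n h \<omega> / gamma0_hat r n 0 \<omega> * gammaa_hat r n 0 \<omega> / gammaa_hat r n h \<omega>)
          \<longlonglongrightarrow> (\<sigma>\<^sup>2 * E) / (\<sigma>\<^sup>2 * measure M (both_nz M r 1 0)) * measure M (both_nz M r 1 0) / measure M (both_nz M r t h)"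
      proof (intro tendsto_divide tendsto_mult)
        show "(\<lambda>n. gamma0_hat r n h \<omega>) \<longlonglongrightarrow> \<sigma>\<^sup>2 * E" using elim(1) GH[of h t] by (simp add: E_def)
        show "(\<lambda>n. gamma0_hat r n 0 \<omega>) \<longlonglongrightarrow> \<sigma>\<^sup>2 * measure M (both_nz M r 1 0)" using elim(2) G0 by simp
        show "(\<lambda>n. gammaa_hat r n 0 \<omega>) \<longlonglongrightarrow> measure M (both_nz M r 1 0)" using elim(3) PA[of 0 1] by simp
        show "(\<lambda>n. gammaa_hat r n h \<omega>) \<longlonglongrightarrow> measure M (both_nz M r t h)" using elim(4) PA[of h t] by simp
      qed (use sig P0pos Phpos in simp_all)
      then show ?case unfolding lim_eq by (simp add: rho_pr_hat_def rho0_hat_def)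
    qed
  qed
  show "AE \<omega> in M. \<forall>h\<in>{1..m}. (\<lambda>n. rho_pr_hat r n h \<omega>)
             \<longlonglongrightarrow> cond_exp_event M (\<lambda>\<omega>. eps t \<omega> * eps (t - int h) \<omega>) (both_nz M r t h)"
    by (rule AE_ball_countable'[OF main]) simp_all
qed

end
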